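(* Let $n\ge 2$ and $t\ge 0$ be integers, and let $a_1,\dots,a_t$ be integers with $1<a_1<\cdots<a_t<n$ and $\gcd(a_j,2n)=1$ for $1\le j\le t$. Then $\chi_{la}(C_{2n}(1,a_1,\dots,a_t))=3$.
   Context: For an integer $m\ge 3$ and integers $s_1,\dots,s_k$, the circulant graph $C_m(s_1,\dots,s_k)$ is the simple graph with vertex set $\mathbb Z_m$ in which distinct vertices $u,v$ are adjacent if and only if $u-v\equiv \pm s_i\pmod m$ for some $i$. For a connected graph $G=(V,E)$ with $q=|E|$, a local antimagic labeling is a bijection $f:E\to\{1,\dots,q\}$ such that adjacent vertices $x,y$ satisfy $f^+(x)\ne f^+(y)$, where $f^+(x)=\sum f(e)$ over edges $e$ incident to $x$; $\chi_{la}(G)$ is the minimum number of distinct values of $f^+$ over all local antimagic labelings $f$ of $G$. *)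

theory Defs
  imports Main
begin

definition circ_vertices :: "nat \<Rightarrow> nat set" where
  "circ_vertices m = {0..<m}"

definition circ_edges :: "nat \<Rightarrow> int set \<Rightarrow> nat set set" where
  "circ_edges m S = {{u, v} | u v. u < m \<and> v < m \<and> u \<noteq> v \<and>
      (\<exists>s\<in>S. (int u - int v) mod int m = s mod int m
            \<or> (int u - int v) mod int m = (- s) mod int m)}"

definition vertex_sum :: "'a set set \<Rightarrow> ('a set \<Rightarrow> nat) \<Rightarrow> 'a \<Rightarrow> nat" where
  "vertex_sum E f x = (\<Sum>e\<in>{e\<in>E. x \<in> e}. f e)"

definition local_antimagic :: "'a set \<Rightarrow> 'a set set \<Rightarrow> ('a set \<Rightarrow> nat) \<Rightarrow> bool" where
  "local_antimagic V E f \<longleftrightarrow>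
     bij_betw f E {1..card E} \<and>
     (\<forall>x\<in>V. \<forall>y\<in>V. {x, y} \<in> E \<longrightarrow> x \<noteq> y \<longrightarrow> vertex_sum E f x \<noteq> vertex_sum E f y)"

definition chi_la :: "'a set \<Rightarrow> 'a set set \<Rightarrow> nat" where
  "chi_la V E = (LEAST k. \<exists>f. local_antimagic V E f \<and> card (vertex_sum E f ` V) = k)"

end

theory Submission
  imports Defs "HOL-Number_Theory.Cong"
begin


lemma addmod: "u < m \<Longrightarrow> s < m \<Longrightarrow> (u + s) mod (m::nat) = (if u + s < m then u + s else u + s - m)"
  by (simp add: mod_if)

lemma even_mod_even: "even (m::nat) \<Longrightarrow> even (a mod m) \<longleftrightarrow> even a"
  by (metis dvd_mod_iff)

definition lab :: "nat \<Rightarrow> nat \<Rightarrow> nat" where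
  "lab n p = (if even p then p div 2 + 1 else 2*n - p div 2)"

lemma lab_range: "p < 2*n \<Longrightarrow> lab n p \<in> {1..2*n}"
  unfolding lab_def by auto

lemma lab_inj: "inj_on (lab n) {0..<2*n}"
proof (rule inj_onI)
  fix p q assume "p \<in> {0..<2*n}" "q \<in> {0..<2*n}" "lab n p = lab n q"
  then show "p = q" unfolding lab_def
    by (cases "even p"; cases "even q"; elim evenE oddE; auto)
qed

lemma lab_pair: assumes "p < 2*n" "n \<ge> 2"
  shows "lab n p + lab n ((p + 2*n - 1) mod (2*n)) =
    (if p = 0 then n + 2 else if even p then 2*n+2 else 2*n+1)"
proof (cases "p = 0")
  case True
  have "(2*n - 1) mod (2*n) = 2*n-1" using assms by simp
  moreover have "odd (2*n-1)" using assms by simp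
  moreover have "(2*n-1) div 2 = n - 1" using assms by presburger
  ultimately show ?thesis using True assms by (simp add: lab_def)
next
  case False
  then have "(p + 2*n - 1) mod (2*n) = p - 1" using assms by (simp add: mod_if)
  then show ?thesis using False assms unfolding lab_def
    by (cases "even p"; elim evenE oddE; auto)
qed



locale circ =
  fixes n :: nat and T :: "nat set"
  assumes n2: "2 \<le> n" and finT: "finite T"
    and Tprop: "\<And>s. s \<in> T \<Longrightarrow> 0 < s \<and> s < n \<and> coprime s (2*n)"
begin

definition psi :: "nat \<times> nat \<Rightarrow> nat set" where
  "psi d = {snd d, (snd d + fst d) mod (2*n)}"
definition D where "D = T \<times> {0..<2*n}"
definition EE where "EE = psi ` D"
definition winv where "winv s = (SOME w. (s*w) mod (2*n) = 1)"
definition pos where "pos s u = (u * winv s) mod (2*n)"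
definition xp where "xp s x = (x + 2*n - s) mod (2*n)"

lemma winv: assumes "s \<in> T" shows "(s * winv s) mod (2*n) = 1"
proof -
  from Tprop[OF assms] have "coprime s (2*n)" by blast
  from cong_solve_coprime_nat[OF this] obtain x where "[s * x = Suc 0] (mod 2*n)" by blast
  then have "(s*x) mod (2*n) = 1" using n2 by (simp add: cong_def)
  then show ?thesis unfolding winv_def by (rule someI)
qed

lemma pos_lt: "pos s u < 2*n" using n2 unfolding pos_def by simp

lemma pos_back: assumes "s \<in> T" "u < 2*n" shows "(pos s u * s) mod (2*n) = u"
proof -
  have "(pos s u * s) mod (2*n) = (u * (s * winv s)) mod (2*n)"
    unfolding pos_def by (metis mod_mult_left_eq mult.assoc mult.commute)
  also have "\<dots> = (u * ((s * winv s) mod (2*n))) mod (2*n)" by (simp add: mod_mult_right_eq)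
  also have "\<dots> = u" using winv[OF assms(1)] assms(2) by simp
  finally show ?thesis .
qed

lemma pos_inj: assumes "s \<in> T" shows "inj_on (pos s) {0..<2*n}"
  by (rule inj_onI) (metis assms pos_back atLeastLessThan_iff)

lemma pos_zero: assumes "s \<in> T" "u < 2*n" shows "pos s u = 0 \<longleftrightarrow> u = 0"
  using pos_back[OF assms] by (auto simp: pos_def)

lemma pos_even: assumes "s \<in> T" shows "even (pos s u) \<longleftrightarrow> even u"
proof -
  have "odd (s * winv s)"
  proof
    assume "even (s * winv s)"
    then have "even ((s * winv s) mod (2*n))" using even_mod_even[of "2*n"] by simp
    then show False using winv[OF assms] by simp
  qed
  then have "odd (winv s)" by simp
  then show ?thesis unfolding pos_def using even_mod_even[of "2*n" "u * winv s"] by simp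
qed

lemma s_facts: assumes "s \<in> T" shows "0 < s" "s < n" "s < 2*n"
  using Tprop[OF assms] by auto

lemma xp_if: assumes "s \<in> T" "x < 2*n" shows "xp s x = (if s \<le> x then x - s else x + 2*n - s)"
  using s_facts[OF assms(1)] assms(2) unfolding xp_def by (simp add: mod_if)

lemma xp_back: assumes "s \<in> T" "x < 2*n" shows "(xp s x + s) mod (2*n) = x"
  using xp_if[OF assms] s_facts[OF assms(1)] assms(2) by (simp add: mod_if)

lemma pos_step: assumes "s \<in> T" "u < 2*n" shows "pos s ((u + s) mod (2*n)) = (pos s u + 1) mod (2*n)"
proof -
  have "pos s ((u + s) mod (2*n)) = ((u + s) * winv s) mod (2*n)"
    unfolding pos_def by (simp add: mod_mult_left_eq)
  also have "\<dots> = (u * winv s + s * winv s) mod (2*n)" by (simp add: algebra_simps)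
  also have "\<dots> = (u * winv s mod (2*n) + (s * winv s) mod (2*n)) mod (2*n)" by (simp add: mod_add_eq)
  also have "\<dots> = (pos s u + 1) mod (2*n)" using winv[OF assms(1)] by (simp add: pos_def)
  finally show ?thesis .
qed

lemma pos_xp: assumes "s \<in> T" "x < 2*n" shows "pos s (xp s x) = (pos s x + 2*n - 1) mod (2*n)"
proof -
  have xl: "xp s x < 2*n" using n2 unfolding xp_def by simp
  have "pos s x = (pos s (xp s x) + 1) mod (2*n)"
    using pos_step[OF assms(1) xl] xp_back[OF assms] by simp
  moreover have "pos s (xp s x) < 2*n" by (rule pos_lt)
  ultimately show ?thesis using n2 by (auto simp: mod_if)
qed

lemma psi_inj: "inj_on psi D"
proof (rule inj_onI)
  fix d d' assume d: "d \<in> D" "d' \<in> D" and eq: "psi d = psi d'"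
  obtain s u where su: "d = (s,u)" by (cases d)
  obtain s' u' where su': "d' = (s',u')" by (cases d')
  have h: "s \<in> T" "u < 2*n" "s' \<in> T" "u' < 2*n" using d su su' by (auto simp: D_def)
  note f = s_facts[OF h(1)] s_facts[OF h(3)]
  have e2: "{u, (u+s) mod (2*n)} = {u', (u'+s') mod (2*n)}" using eq su su' by (simp add: psi_def)
  have a1: "(u+s) mod (2*n) = (if u + s < 2*n then u+s else u+s-2*n)" using addmod h f by simp
  have a2: "(u'+s') mod (2*n) = (if u' + s' < 2*n then u'+s' else u'+s'-2*n)" using addmod h f by simp
  from e2 have "(u = u' \<and> (u+s) mod (2*n) = (u'+s') mod (2*n)) \<or> (u = (u'+s') mod (2*n) \<and> (u+s) mod (2*n) = u')"
    by (auto simp: doubleton_eq_iff)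
  then have "u = u' \<and> s = s'" unfolding a1 a2 using h f by (auto split: if_splits)
  then show "d = d'" using su su' by simp
qed

lemma xp_facts: assumes "s \<in> T" "x < 2*n" shows "xp s x < 2*n" "xp s x \<noteq> x"
  using xp_if[OF assms] s_facts[OF assms(1)] assms(2) by auto

lemma incid: assumes "x < 2*n" shows "{d \<in> D. x \<in> psi d} = Sigma T (\<lambda>s. {x, xp s x})"
proof (rule set_eqI)
  fix d :: "nat \<times> nat"
  obtain s u where su: "d = (s,u)" by (cases d)
  show "d \<in> {d \<in> D. x \<in> psi d} \<longleftrightarrow> d \<in> Sigma T (\<lambda>s. {x, xp s x})"
  proof (cases "s \<in> T")
    case True
    note f = s_facts[OF True]
    have a1: "u < 2*n \<Longrightarrow> (u+s) mod (2*n) = (if u + s < 2*n then u+s else u+s-2*n)" using addmod f by simp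
    show ?thesis using a1 xp_if[OF True assms] assms f
      by (auto simp: su D_def psi_def split: if_splits)
  next
    case False
    then show ?thesis by (simp add: su D_def)
  qed
qed

lemma finD: "finite D" using finT by (simp add: D_def)

lemma sum_incid: assumes "x < 2*n"
  shows "(\<Sum>e\<in>{e\<in>EE. x\<in>e}. h e) = (\<Sum>s\<in>T. h (psi (s,x)) + h (psi (s, xp s x)))"
proof -
  have "{e\<in>EE. x\<in>e} = psi ` {d \<in> D. x \<in> psi d}" by (auto simp: EE_def)
  moreover have "inj_on psi {d \<in> D. x \<in> psi d}" using psi_inj by (rule inj_on_subset) auto
  ultimately have "(\<Sum>e\<in>{e\<in>EE. x\<in>e}. h e) = (\<Sum>d\<in>{d \<in> D. x \<in> psi d}. h (psi d))"
    by (simp add: sum.reindex)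
  also have "\<dots> = (\<Sum>d\<in>Sigma T (\<lambda>s. {x, xp s x}). h (psi d))" using incid[OF assms] by simp
  also have "\<dots> = (\<Sum>s\<in>T. \<Sum>u\<in>{x, xp s x}. h (psi (s,u)))"
    using finT by (subst sum.Sigma) auto
  also have "\<dots> = (\<Sum>s\<in>T. h (psi (s,x)) + h (psi (s, xp s x)))"
  proof (rule sum.cong)
    fix s assume "s \<in> T"
    then have "x \<noteq> xp s x" using xp_facts[OF _ assms] by metis
    then show "(\<Sum>u\<in>{x, xp s x}. h (psi (s,u))) = h (psi (s,x)) + h (psi (s, xp s x))" by simp
  qed simp
  finally show ?thesis .
qed

end


lemma blocks: assumes "(a::nat)*k + l = a*k' + l'" "1 \<le> l" "l \<le> a" "1 \<le> l'" "l' \<le> a"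
  shows "k = k' \<and> l = l'"
proof -
  have "\<not> k < k'"
  proof
    assume "k < k'" then have "a*(k+1) \<le> a*k'" by (intro mult_le_mono2) simp
    then show False using assms by simp
  qed
  moreover have "\<not> k' < k"
  proof
    assume "k' < k" then have "a*(k'+1) \<le> a*k" by (intro mult_le_mono2) simp
    then show False using assms by simp
  qed
  ultimately show ?thesis using assms by simp
qed

lemma imod_diff: "0 \<le> u \<Longrightarrow> u < M \<Longrightarrow> 0 \<le> v \<Longrightarrow> v < M \<Longrightarrow>
   (u - v) mod (M::int) = (if v \<le> u then u - v else u - v + M)"
proof (cases "v \<le> u")
  case True assume "0 \<le> u" "u < M" "0 \<le> v" "v < M" with True show ?thesis by simp
next
  case False assume a: "0 \<le> u" "u < M" "0 \<le> v" "v < M"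
  then have "(u - v) mod M = (u - v + M) mod M" by simp
  also have "\<dots> = u - v + M" using a False by (intro mod_pos_pos_trivial) auto
  finally show ?thesis using False by simp
qed

lemma imod_neg: "0 < s \<Longrightarrow> s < M \<Longrightarrow> (- s) mod (M::int) = M - s"
proof -
  assume a: "0 < s" "s < M"
  have "(M - s) mod M = M - s" using a by (intro mod_pos_pos_trivial) auto
  moreover have "(M - s) mod M = (- s) mod M" by (simp add: mod_diff_eq[symmetric])
  ultimately show ?thesis by simp
qed

context circ begin

definition g where "g r d = 2*n * r (fst d) + lab n (pos (fst d) (snd d))"
definition ff where "ff r e = g r (inv_into D psi e)"
definition cc where "cc x = (if x = 0 then n+2 else if even x then 2*n+2 else 2*n+1)"

lemma cardEE: "card EE = card T * (2*n)"
  using psi_inj finD by (simp add: EE_def card_image D_def card_cartesian_product)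

lemma g_bij: assumes r: "bij_betw r T {0..<card T}" shows "bij_betw (g r) D {1..card T * (2*n)}"
proof -
  have inj: "inj_on (g r) D"
  proof (rule inj_onI)
    fix d d' assume d: "d \<in> D" "d' \<in> D" and eq: "g r d = g r d'"
    obtain s u where su: "d = (s,u)" by (cases d)
    obtain s' u' where su': "d' = (s',u')" by (cases d')
    have h: "s \<in> T" "u < 2*n" "s' \<in> T" "u' < 2*n" using d su su' by (auto simp: D_def)
    have l1: "lab n (pos s u) \<in> {1..2*n}" "lab n (pos s' u') \<in> {1..2*n}" using lab_range pos_lt by auto
    from blocks[of "2*n" "r s" "lab n (pos s u)" "r s'" "lab n (pos s' u')"] eq l1
    have "r s = r s'" "lab n (pos s u) = lab n (pos s' u')" by (auto simp: g_def su su')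
    then have ss: "s = s'" using r h by (metis bij_betw_def inj_onD)
    then have "pos s u = pos s u'" using lab_inj[of n] pos_lt \<open>lab n (pos s u) = lab n (pos s' u')\<close>
      by (metis atLeast0LessThan lessThan_iff inj_onD)
    then have "u = u'" using pos_inj[OF h(1)] h by (auto dest: inj_onD)
    then show "d = d'" using ss su su' by simp
  qed
  have sub: "g r ` D \<subseteq> {1..card T * (2*n)}"
  proof
    fix y assume "y \<in> g r ` D"
    then obtain s u where h: "s \<in> T" "u < 2*n" "y = g r (s,u)" by (auto simp: D_def)
    have "r s < card T" using r h by (auto simp: bij_betw_def)
    then have "r s + 1 \<le> card T" by simp
    then have "2*n*(r s + 1) \<le> 2*n*card T" by (rule mult_le_mono2)
    moreover have "lab n (pos s u) \<in> {1..2*n}" using lab_range pos_lt by auto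
    ultimately show "y \<in> {1..card T * (2*n)}" using h by (auto simp: g_def algebra_simps)
  qed
  have "card (g r ` D) = card T * (2*n)" using inj finD by (simp add: card_image D_def card_cartesian_product)
  then have "g r ` D = {1..card T * (2*n)}" using sub by (intro card_subset_eq) auto
  then show ?thesis using inj by (simp add: bij_betw_def)
qed

lemma ff_bij: assumes r: "bij_betw r T {0..<card T}" shows "bij_betw (ff r) EE {1..card EE}"
proof -
  have "bij_betw (inv_into D psi) EE D" unfolding EE_def using psi_inj by (rule bij_betw_inv_into[OF inj_on_imp_bij_betw])
  from bij_betw_trans[OF this g_bij[OF r]] show ?thesis unfolding ff_def[abs_def] by (simp add: cardEE comp_def)
qed

lemma ff_psi: "d \<in> D \<Longrightarrow> ff r (psi d) = g r d"
  unfolding ff_def using psi_inj by (simp add: inv_into_f_f)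

lemma vsum: assumes "x < 2*n"
  shows "vertex_sum EE (ff r) x = (\<Sum>s\<in>T. 4*n * r s) + card T * cc x"
proof -
  have "vertex_sum EE (ff r) x = (\<Sum>s\<in>T. ff r (psi (s,x)) + ff r (psi (s, xp s x)))"
    unfolding vertex_sum_def by (rule sum_incid[OF assms])
  also have "\<dots> = (\<Sum>s\<in>T. 4*n * r s + cc x)"
  proof (rule sum.cong)
    fix s assume s: "s \<in> T"
    have "(s,x) \<in> D" "(s, xp s x) \<in> D" using s assms xp_facts[OF s assms] by (auto simp: D_def)
    then have "ff r (psi (s,x)) + ff r (psi (s, xp s x)) = 4*n * r s + (lab n (pos s x) + lab n (pos s (xp s x)))"
      by (simp add: ff_psi g_def)
    also have "lab n (pos s x) + lab n (pos s (xp s x)) = cc x"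
      using lab_pair[OF pos_lt n2, of s x] pos_xp[OF s assms] pos_zero[OF s assms] pos_even[OF s]
      by (simp add: cc_def)
    finally show "ff r (psi (s,x)) + ff r (psi (s, xp s x)) = 4*n * r s + cc x" .
  qed simp
  also have "\<dots> = (\<Sum>s\<in>T. 4*n * r s) + card T * cc x" by (simp add: sum.distrib)
  finally show ?thesis .
qed

lemma degree: assumes "x < 2*n" shows "card {e\<in>EE. x\<in>e} = 2 * card T"
proof -
  have "card {e\<in>EE. x\<in>e} = (\<Sum>e\<in>{e\<in>EE. x\<in>e}. 1)" by simp
  also have "\<dots> = (\<Sum>s\<in>T. (1::nat) + 1)" by (rule sum_incid[OF assms])
  finally show ?thesis by simp
qed

lemma edges_eq: assumes "T = nat ` S" "\<forall>s\<in>S. 0 < s"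
  shows "circ_edges (2*n) S = EE"
proof
  show "circ_edges (2*n) S \<subseteq> EE"
  proof
    fix e assume "e \<in> circ_edges (2*n) S"
    then obtain u v s where h: "e = {u,v}" "u < 2*n" "v < 2*n" "u \<noteq> v" "s \<in> S"
      "(int u - int v) mod int (2*n) = s mod int (2*n) \<or> (int u - int v) mod int (2*n) = (- s) mod int (2*n)"
      unfolding circ_edges_def by blast
    define s' where "s' = nat s"
    have s': "s' \<in> T" "int s' = s" using h assms by (auto simp: s'_def)
    note f = s_facts[OF s'(1)]
    have m1: "s mod int (2*n) = s" using f s' by simp
    have m2: "(- s) mod int (2*n) = int (2*n) - s" using f s' by (intro imod_neg) auto
    have m3: "(int u - int v) mod int (2*n) = (if int v \<le> int u then int u - int v else int u - int v + int (2*n))"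
      using h by (intro imod_diff) auto
    have a1: "(v+s') mod (2*n) = (if v + s' < 2*n then v+s' else v+s'-2*n)" using addmod h f by simp
    have a2: "(u+s') mod (2*n) = (if u + s' < 2*n then u+s' else u+s'-2*n)" using addmod h f by simp
    have c: "(v + s' < 2*n \<and> u = v + s') \<or> (v + s' \<ge> 2*n \<and> u = v + s' - 2*n) \<or>
       (u + s' < 2*n \<and> v = u + s') \<or> (u + s' \<ge> 2*n \<and> v = u + s' - 2*n)"
      using h(6) unfolding m1 m2 m3 using s' f h(2,3) by (auto split: if_splits)
    have "e = psi (s', v) \<or> e = psi (s', u)"
      using c unfolding psi_def h(1) snd_conv fst_conv a1 a2 by (auto simp: insert_commute)
    then show "e \<in> EE" using s' h by (auto simp: EE_def D_def)
  qed
next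
  show "EE \<subseteq> circ_edges (2*n) S"
  proof
    fix e assume "e \<in> EE"
    then obtain s' u where h: "s' \<in> T" "u < 2*n" "e = psi (s', u)" by (auto simp: EE_def D_def)
    note f = s_facts[OF h(1)]
    define v where "v = (u + s') mod (2*n)"
    have a2: "v = (if u + s' < 2*n then u+s' else u+s'-2*n)" using addmod h f v_def by simp
    have sS: "int s' \<in> S" using h assms by auto
    have m2: "(- int s') mod int (2*n) = int (2*n) - int s'" using f by (intro imod_neg) auto
    have m3: "(int u - int v) mod int (2*n) = (if int v \<le> int u then int u - int v else int u - int v + int (2*n))"
      using h a2 f by (intro imod_diff) auto
    have "v < 2*n" "u \<noteq> v" "(int u - int v) mod int (2*n) = (- int s') mod int (2*n)"
      using a2 f h unfolding m2 m3 by auto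
    moreover have "e = {u, v}" by (simp add: h psi_def v_def)
    ultimately show "e \<in> circ_edges (2*n) S" unfolding circ_edges_def using h(2) sS
      by blast
  qed
qed

end


lemma dcount: fixes h :: "'a set \<Rightarrow> nat" assumes "finite Z" "finite E" "\<forall>e\<in>E. card (Z \<inter> e) = 1"
  shows "(\<Sum>x\<in>Z. \<Sum>e\<in>{e\<in>E. x\<in>e}. h e) = (\<Sum>e\<in>E. h e)"
proof -
  have "(\<Sum>x\<in>Z. \<Sum>e\<in>{e\<in>E. x\<in>e}. h e) = (\<Sum>e\<in>E. \<Sum>x\<in>{x\<in>Z. x\<in>e}. h e)"
    using assms(1,2) by (rule sum.swap_restrict)
  also have "\<dots> = (\<Sum>e\<in>E. h e)"
  proof (rule sum.cong)
    fix e assume "e \<in> E"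
    then have "card {x\<in>Z. x\<in>e} = 1" using assms(3) by (simp add: Int_def)
    then show "(\<Sum>x\<in>{x\<in>Z. x\<in>e}. h e) = h e" by simp
  qed simp
  finally show ?thesis .
qed

lemma lower:
  assumes finV: "finite V" and finE: "finite E"
    and Esub: "\<forall>e\<in>E. \<exists>u v. e = {u,v} \<and> u \<noteq> v \<and> u \<in> V \<and> v \<in> V"
    and deg: "\<forall>x\<in>V. card {e\<in>E. x\<in>e} = d"
    and LA: "local_antimagic V E f"
    and x0: "x0 \<in> V" "y0 \<in> V" "{x0,y0} \<in> E" "x0 \<noteq> y0"
  shows "3 \<le> card (vertex_sum E f ` V)"
proof (rule ccontr)
  assume c: "\<not> 3 \<le> card (vertex_sum E f ` V)"
  define F where "F = vertex_sum E f"
  define a where "a = F x0"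
  define b where "b = F y0"
  have ab: "a \<noteq> b" using LA x0 unfolding local_antimagic_def a_def b_def F_def by blast
  have sub: "{a,b} \<subseteq> F ` V" using x0 by (auto simp: a_def b_def)
  have "card {a,b} = 2" using ab by simp
  then have "card (F ` V) = 2" using c sub card_mono[OF finite_imageI[OF finV] sub] by (simp add: F_def)
  then have img: "F ` V = {a,b}" using sub \<open>card {a,b} = 2\<close> finV by (metis card_subset_eq finite_imageI)
  define X where "X = {x\<in>V. F x = a}"
  define Y where "Y = {x\<in>V. F x = b}"
  have one: "card (X \<inter> e) = 1 \<and> card (Y \<inter> e) = 1" if e: "e \<in> E" for e
  proof -
    obtain u v where uv: "e = {u,v}" "u \<noteq> v" "u \<in> V" "v \<in> V" using Esub e by blast
    have ne: "F u \<noteq> F v" using LA uv e unfolding local_antimagic_def F_def by blast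
    have "F u \<in> {a,b}" "F v \<in> {a,b}" using img uv by auto
    then have "(X \<inter> e = {u} \<and> Y \<inter> e = {v}) \<or> (X \<inter> e = {v} \<and> Y \<inter> e = {u})"
      using ne uv ab by (auto simp: X_def Y_def)
    then show ?thesis by auto
  qed
  have fX: "finite X" "finite Y" using finV by (auto simp: X_def Y_def)
  have s1: "(\<Sum>x\<in>X. F x) = (\<Sum>e\<in>E. f e)" "(\<Sum>x\<in>Y. F x) = (\<Sum>e\<in>E. f e)"
    unfolding F_def vertex_sum_def using dcount[OF fX(1) finE] dcount[OF fX(2) finE] one by auto
  have s2: "(\<Sum>x\<in>X. card {e\<in>E. x\<in>e}) = card E" "(\<Sum>x\<in>Y. card {e\<in>E. x\<in>e}) = card E"
  proof -
    have cs: "\<And>A. card A = (\<Sum>e\<in>A. (1::nat))" by simp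
    show "(\<Sum>x\<in>X. card {e\<in>E. x\<in>e}) = card E" "(\<Sum>x\<in>Y. card {e\<in>E. x\<in>e}) = card E"
      unfolding cs using dcount[OF fX(1) finE, of "\<lambda>_. 1"] dcount[OF fX(2) finE, of "\<lambda>_. 1"] one
      by auto
  qed
  have "card X * a = card Y * b" using s1 by (simp add: X_def Y_def)
  moreover have "card X * d = card Y * d" using s2 deg by (simp add: X_def Y_def)
  moreover have "d > 0"
  proof -
    have "{x0,y0} \<in> {e\<in>E. x0\<in>e}" using x0 by simp
    then have "card {e\<in>E. x0\<in>e} > 0" using finE by (metis (no_types, lifting) card_gt_0_iff empty_iff finite_subset mem_Collect_eq subsetI)
    then show ?thesis using deg x0 by simp
  qed
  moreover have "card X > 0" using x0 fX by (auto simp: X_def a_def card_gt_0_iff)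
  ultimately show False using ab by simp
qed


theorem mainTheorem6:
  fixes n :: nat and as :: "int list"
  assumes "n \<ge> 2"
    and "sorted_wrt (<) as"
    and "\<forall>a\<in>set as. 1 < a \<and> a < int n \<and> gcd a (2 * int n) = 1"
  shows "chi_la (circ_vertices (2 * n)) (circ_edges (2 * n) (insert 1 (set as))) = 3"
proof -
  define S where "S = insert 1 (set as)"
  define T where "T = nat ` S"
  have Sp: "\<forall>s\<in>S. 0 < s \<and> s < int n \<and> coprime s (int (2*n))"
    using assms(1,3) by (auto simp: S_def coprime_iff_gcd_eq_1)
  interpret circ n T
  proof
    show "2 \<le> n" by fact
    show "finite T" by (simp add: T_def S_def)
    fix s assume "s \<in> T"
    then obtain a where a: "a \<in> S" "s = nat a" by (auto simp: T_def)
    then have "0 < a" "a < int n" "coprime a (int (2*n))" using Sp by auto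
    moreover have "coprime (nat \<bar>a\<bar>) (2*n)" using \<open>coprime a (int (2*n))\<close> by simp
    ultimately show "0 < s \<and> s < n \<and> coprime s (2*n)" using a by auto
  qed
  have EEq: "circ_edges (2*n) S = EE" using Sp by (intro edges_eq) (auto simp: T_def)
  have oneT: "1 \<in> T" by (simp add: T_def S_def)
  have cT: "card T > 0" using oneT finT by (auto simp: card_gt_0_iff)
  define V where "V = circ_vertices (2*n)"
  have V: "V = {0..<2*n}" by (simp add: V_def circ_vertices_def)
  have finE: "finite EE" using finD by (simp add: EE_def)
  have edge_form: "\<exists>s u. s \<in> T \<and> u < 2*n \<and> e = {u, (u+s) mod (2*n)} \<and> u \<noteq> (u+s) mod (2*n)
      \<and> (u+s) mod (2*n) < 2*n" if eE: "e \<in> EE" for e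
  proof -
    obtain d where d: "d \<in> D" "e = psi d" using eE by (auto simp: EE_def)
    obtain s u where h: "s \<in> T" "u < 2*n" "e = psi (s,u)" using d by (cases d) (auto simp: D_def)
    note f = s_facts[OF h(1)]
    have m: "(u+s) mod (2*n) = (if u + s < 2*n then u+s else u+s-2*n)" using addmod h f by simp
    have "u \<noteq> (u+s) mod (2*n)" "(u+s) mod (2*n) < 2*n"
      using h f m by auto
    moreover have "e = {u, (u+s) mod (2*n)}" by (simp add: h psi_def)
    ultimately show ?thesis using h by blast
  qed
  have e01: "{0,1} \<in> EE"
  proof -
    have "psi (1,0) \<in> EE" using oneT n2 by (auto simp: EE_def D_def)
    moreover have "psi (1,0) = {0,1}" using n2 by (simp add: psi_def)
    ultimately show ?thesis by simp
  qed
  have low: "3 \<le> k" if kex: "\<exists>f. local_antimagic V EE f \<and> card (vertex_sum EE f ` V) = k"  for k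
  proof -
    obtain f where f: "local_antimagic V EE f" "card (vertex_sum EE f ` V) = k" using kex by blast
    have "3 \<le> card (vertex_sum EE f ` V)"
    proof (rule lower[where d = "2 * card T" and ?x0.0 = 0 and ?y0.0 = 1])
      show "finite V" by (simp add: V)
      show "finite EE" by fact
      show "\<forall>e\<in>EE. \<exists>u v. e = {u,v} \<and> u \<noteq> v \<and> u \<in> V \<and> v \<in> V"
        using edge_form V by fastforce
      show "\<forall>x\<in>V. card {e\<in>EE. x\<in>e} = 2 * card T" using degree V by auto
      show "local_antimagic V EE f" by fact
      show "0 \<in> V" "1 \<in> V" using V n2 by auto
      show "{0,1} \<in> EE" by fact
    qed simp
    then show ?thesis using f by simp
  qed
  obtain r where r: "bij_betw r T {0..<card T}" using ex_bij_betw_finite_nat[OF finT] by blast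
  define A where "A = (\<Sum>s\<in>T. 4*n * r s)"
  have vs: "vertex_sum EE (ff r) x = A + card T * cc x" if "x \<in> V" for x
    using vsum[of x r] that V by (simp add: A_def)
  have ex: "local_antimagic V EE (ff r) \<and> card (vertex_sum EE (ff r) ` V) = 3"
  proof
    show "local_antimagic V EE (ff r)" unfolding local_antimagic_def
    proof (intro conjI ballI impI)
      show "bij_betw (ff r) EE {1..card EE}" by (rule ff_bij[OF r])
      fix x y assume xy: "x \<in> V" "y \<in> V" "{x,y} \<in> EE" "x \<noteq> y"
      obtain s u where h: "s \<in> T" "u < 2*n" "{x,y} = {u, (u+s) mod (2*n)}"
        using edge_form[OF xy(3)] by blast
      have "odd s"
      proof
        assume "even s"
        then have "2 dvd gcd s (2*n)" by simp
        moreover have "gcd s (2*n) = 1" using Tprop[OF h(1)] by (simp add: coprime_iff_gcd_eq_1)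
        ultimately show False by simp
      qed
      have "even ((u+s) mod (2*n)) \<longleftrightarrow> even (u+s)" by (rule even_mod_even) simp
      then have "even x \<noteq> even y" using h \<open>odd s\<close> xy(4) by (auto simp: doubleton_eq_iff)
      then have "cc x \<noteq> cc y" using n2 by (auto simp: cc_def elim: oddE)
      then show "vertex_sum EE (ff r) x \<noteq> vertex_sum EE (ff r) y" using vs xy cT by simp
    qed
    have "vertex_sum EE (ff r) ` V = {A + card T * (n+2), A + card T * (2*n+2), A + card T * (2*n+1)}"
    proof
      show "vertex_sum EE (ff r) ` V \<subseteq> {A + card T * (n+2), A + card T * (2*n+2), A + card T * (2*n+1)}"
        using vs by (auto simp: cc_def)
      have "0 \<in> V" "2 \<in> V" "1 \<in> V" using V n2 by auto
      moreover have "vertex_sum EE (ff r) 0 = A + card T * (n+2)" using vs[of 0] \<open>0 \<in> V\<close> by (simp add: cc_def)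
      moreover have "vertex_sum EE (ff r) 2 = A + card T * (2*n+2)" using vs[of 2] \<open>2 \<in> V\<close> by (simp add: cc_def)
      moreover have "vertex_sum EE (ff r) 1 = A + card T * (2*n+1)" using vs[of 1] \<open>1 \<in> V\<close> by (simp add: cc_def)
      ultimately show "{A + card T * (n+2), A + card T * (2*n+2), A + card T * (2*n+1)} \<subseteq> vertex_sum EE (ff r) ` V"
        by (metis empty_subsetI image_eqI insert_subset)
    qed
    then show "card (vertex_sum EE (ff r) ` V) = 3" using cT n2 by simp
  qed
  have "chi_la V EE = 3" unfolding chi_la_def
    by (rule Least_equality) (use ex low in auto)
  then show ?thesis using EEq by (simp add: S_def V_def)
qed

end
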